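(* Let $C$ be a closed, regular cone with nonempty interior in a real Banach space. Let $f:\operatorname{int}C\to\operatorname{int}C$ be order-preserving and subhomogeneous. Then the limit $f_\infty(x)=\lim_{t\to\infty}t^{-1}f(tx)$ exists for every $x\in\operatorname{int}C$, the map $f_\infty:\operatorname{int}C\to C$ is order-preserving and homogeneous, and $r(f)=r(f_\infty)$.
   Context: A closed cone $C$ (closed convex, $\lambda C\subseteq C$ for $\lambda\ge0$, $C\cap(-C)=\{0\}$) induces the order $x\le y$ iff $y-x\in C$; $C$ is regular if every decreasing sequence in $C$ converges. $f$ is order-preserving if $x\le y\Rightarrow f(x)\le f(y)$; homogeneous if $f(tx)=tf(x)$ for all $t>0$; subhomogeneous if $f(tx)\le tf(x)$ for all $t\ge1$. For $g:\operatorname{int}C\to C$, $r(g)=\inf_{x\in\operatorname{int}C}M(g(x)/x)$ where $M(x/y)=\inf\{\beta>0:x\le\beta y\}$. *)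

theory Defs
  imports "HOL-Analysis.Analysis"
begin

definition closed_cone :: "'a::real_normed_vector set \<Rightarrow> bool" where
  "closed_cone C \<longleftrightarrow> closed C \<and> convex C \<and> C \<noteq> {} \<and>
     (\<forall>c::real. \<forall>x\<in>C. c \<ge> 0 \<longrightarrow> c *\<^sub>R x \<in> C) \<and>
     C \<inter> uminus ` C = {0}"

definition cone_le :: "'a::real_normed_vector set \<Rightarrow> 'a \<Rightarrow> 'a \<Rightarrow> bool" where
  "cone_le C x y \<longleftrightarrow> y - x \<in> C"

definition regular_cone :: "'a::real_normed_vector set \<Rightarrow> bool" where
  "regular_cone C \<longleftrightarrow> (\<forall>s::nat \<Rightarrow> 'a. (\<forall>n. s n \<in> C) \<and> (\<forall>n. cone_le C (s (Suc n)) (s n))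
      \<longrightarrow> convergent s)"

definition order_preserving_on :: "'a::real_normed_vector set \<Rightarrow> 'a set \<Rightarrow> ('a \<Rightarrow> 'a) \<Rightarrow> bool" where
  "order_preserving_on C D f \<longleftrightarrow> (\<forall>x\<in>D. \<forall>y\<in>D. cone_le C x y \<longrightarrow> cone_le C (f x) (f y))"

definition homogeneous_on :: "'a::real_normed_vector set \<Rightarrow> ('a \<Rightarrow> 'a) \<Rightarrow> bool" where
  "homogeneous_on D f \<longleftrightarrow> (\<forall>x\<in>D. \<forall>t::real. t > 0 \<longrightarrow> f (t *\<^sub>R x) = t *\<^sub>R f x)"

definition subhomogeneous_on :: "'a::real_normed_vector set \<Rightarrow> 'a set \<Rightarrow> ('a \<Rightarrow> 'a) \<Rightarrow> bool" where
  "subhomogeneous_on C D f \<longleftrightarrow> (\<forall>x\<in>D. \<forall>t::real. t \<ge> 1 \<longrightarrow> cone_le C (f (t *\<^sub>R x)) (t *\<^sub>R f x))"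

definition Mfun :: "'a::real_normed_vector set \<Rightarrow> 'a \<Rightarrow> 'a \<Rightarrow> real" where
  "Mfun C x y = Inf {\<beta>::real. \<beta> > 0 \<and> cone_le C x (\<beta> *\<^sub>R y)}"

definition cone_spectral_radius :: "'a::real_normed_vector set \<Rightarrow> ('a \<Rightarrow> 'a) \<Rightarrow> real" where
  "cone_spectral_radius C g = Inf ((\<lambda>x. Mfun C (g x) x) ` interior C)"

definition asymptotic_map :: "('a::real_normed_vector \<Rightarrow> 'a) \<Rightarrow> 'a \<Rightarrow> 'a" where
  "asymptotic_map f x = Lim at_top (\<lambda>t::real. inverse t *\<^sub>R f (t *\<^sub>R x))"

end

theory Submission
  imports Defs
begin

lemma cc_scale: "closed_cone C \<Longrightarrow> c \<ge> 0 \<Longrightarrow> x \<in> C \<Longrightarrow> c *\<^sub>R x \<in> C"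
  unfolding closed_cone_def by blast

lemma cc_zero: "closed_cone C \<Longrightarrow> 0 \<in> C"
  using cc_scale[of C 0] unfolding closed_cone_def by fastforce

lemma cc_add: assumes "closed_cone C" "x \<in> C" "y \<in> C" shows "x + y \<in> C"
proof -
  have "(1/2) *\<^sub>R x + (1/2) *\<^sub>R y \<in> C"
    using assms unfolding closed_cone_def by (intro convexD) auto
  then have "2 *\<^sub>R ((1/2) *\<^sub>R x + (1/2) *\<^sub>R y) \<in> C" using cc_scale[OF assms(1)] by simp
  then show ?thesis by (simp add: scaleR_right_distrib)
qed

lemma cc_closed: "closed_cone C \<Longrightarrow> closed C"
  unfolding closed_cone_def by blast

lemma le_trans: "closed_cone C \<Longrightarrow> cone_le C x y \<Longrightarrow> cone_le C y z \<Longrightarrow> cone_le C x z"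
  unfolding cone_le_def using cc_add[of C "z - y" "y - x"] by simp

lemma le_antisym: assumes "closed_cone C" "cone_le C x y" "cone_le C y x" shows "x = y"
proof -
  have "y - x \<in> C" "x - y \<in> C" using assms unfolding cone_le_def by auto
  then have "y - x \<in> uminus ` C" by (metis image_eqI minus_diff_eq)
  with \<open>y - x \<in> C\<close> have "y - x \<in> C \<inter> uminus ` C" by blast
  then show ?thesis using assms(1) unfolding closed_cone_def by auto
qed

lemma le_scale: "closed_cone C \<Longrightarrow> c \<ge> 0 \<Longrightarrow> cone_le C x y \<Longrightarrow> cone_le C (c *\<^sub>R x) (c *\<^sub>R y)"
  unfolding cone_le_def using cc_scale[of C c "y - x"] by (simp add: scaleR_right_diff_distrib)

lemma int_scale: assumes "closed_cone C" "x \<in> interior C" "t > 0" shows "t *\<^sub>R x \<in> interior C"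
proof -
  obtain e where e: "e > 0" "ball x e \<subseteq> C" using assms(2) mem_interior by blast
  have "ball (t *\<^sub>R x) (t * e) \<subseteq> C"
  proof
    fix y assume "y \<in> ball (t *\<^sub>R x) (t * e)"
    then have "norm (t *\<^sub>R x - y) < t * e" by (simp add: dist_norm)
    also have "t *\<^sub>R x - y = t *\<^sub>R (x - inverse t *\<^sub>R y)" using assms(3)
      by (simp add: scaleR_right_diff_distrib)
    finally have "t * norm (x - inverse t *\<^sub>R y) < t * e" using assms(3) by simp
    then have "norm (x - inverse t *\<^sub>R y) < e" using assms(3) by simp
    then have "inverse t *\<^sub>R y \<in> C" using e by (auto simp: dist_norm)
    then have "t *\<^sub>R (inverse t *\<^sub>R y) \<in> C" using cc_scale[OF assms(1)] assms(3) by (meson less_imp_le)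
    then show "y \<in> C" using assms(3) by simp
  qed
  then show ?thesis using assms(3) e(1) mem_interior by (metis mult_pos_pos)
qed

lemma int_absorb: assumes "x \<in> interior C"
  obtains d where "d > 0" "\<And>v. norm v < d \<Longrightarrow> x + v \<in> C"
proof -
  obtain e where e: "e > 0" "ball x e \<subseteq> C" using assms mem_interior by blast
  show ?thesis by (rule that[of e]) (use e in \<open>auto simp: dist_norm subset_eq\<close>)
qed

lemma int_dominates: assumes "closed_cone C" "x \<in> interior C"
  shows "\<exists>\<beta>>0. cone_le C v (\<beta> *\<^sub>R x)"
proof -
  obtain d where d: "d > 0" "\<And>w. norm w < d \<Longrightarrow> x + w \<in> C" using int_absorb[OF assms(2)] by blast
  define \<beta> where "\<beta> = 2 * norm v / d + 1"
  have bp: "\<beta> > 0" unfolding \<beta>_def using d by (simp add: add_nonneg_pos)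
  have "norm (- inverse \<beta> *\<^sub>R v) = norm v / \<beta>" using bp by (simp add: divide_inverse mult.commute)
  also have "\<dots> < d"
  proof -
    have "norm v < d * \<beta>" unfolding \<beta>_def using d
      by (simp add: distrib_left) (smt (verit, best) norm_ge_zero)
    then show ?thesis using bp by (simp add: divide_less_eq)
  qed
  finally have "x + (- inverse \<beta> *\<^sub>R v) \<in> C" using d by blast
  then have "\<beta> *\<^sub>R (x + (- inverse \<beta> *\<^sub>R v)) \<in> C" using cc_scale[OF assms(1)] bp by simp
  then have "\<beta> *\<^sub>R x - v \<in> C" using bp by (simp add: scaleR_right_diff_distrib)
  then show ?thesis using bp unfolding cone_le_def by blast
qed

lemma Mfun_le: "\<beta> > 0 \<Longrightarrow> cone_le C v (\<beta> *\<^sub>R x) \<Longrightarrow> Mfun C v x \<le> \<beta>"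
  unfolding Mfun_def by (rule cInf_lower) (auto intro!: bdd_belowI[of _ 0])

lemma Mfun_nonneg: "closed_cone C \<Longrightarrow> x \<in> interior C \<Longrightarrow> Mfun C v x \<ge> 0"
  unfolding Mfun_def using int_dominates[of C x v]
  by (intro cInf_greatest) auto

lemma Mfun_mono: assumes "closed_cone C" "x \<in> interior C" "cone_le C u v"
  shows "Mfun C u x \<le> Mfun C v x"
  unfolding Mfun_def[of C v x] using int_dominates[OF assms(1,2), of v]
  by (intro cInf_greatest) (auto intro: Mfun_le le_trans[OF assms(1) assms(3)])

lemma closed_lim: "closed_cone C \<Longrightarrow> (s \<longlongrightarrow> a) F \<Longrightarrow> F \<noteq> bot \<Longrightarrow> eventually (\<lambda>x. s x \<in> C) F \<Longrightarrow> a \<in> C"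
  using Lim_in_closed_set cc_closed by blast

lemma dec_limit:
  fixes g :: "real \<Rightarrow> 'a::banach"
  assumes cc: "closed_cone C" and reg: "regular_cone C"
    and mono: "\<And>t s. 1 \<le> t \<Longrightarrow> t \<le> s \<Longrightarrow> cone_le C (g s) (g t)"
    and inC: "\<And>t. 1 \<le> t \<Longrightarrow> g t \<in> C"
  shows "\<exists>L. (g \<longlongrightarrow> L) at_top \<and> (\<forall>t\<ge>1. cone_le C L (g t))"
proof -
  have below: "cone_le C M (g t)" if lim: "(\<lambda>n. g (v n)) \<longlonglongrightarrow> M"
      and ev: "eventually (\<lambda>n. v n \<ge> t) sequentially" and t: "t \<ge> 1" for v M t
  proof -
    have ev1: "eventually (\<lambda>n. g t - g (v n) \<in> C) sequentially"
      using ev by eventually_elim (use mono t in \<open>auto simp: cone_le_def\<close>)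
    have lim1: "(\<lambda>n. g t - g (v n)) \<longlonglongrightarrow> g t - M" by (intro tendsto_intros lim)
    have "g t - M \<in> C" by (rule closed_lim[OF cc lim1 trivial_limit_sequentially ev1])
    then show ?thesis unfolding cone_le_def .
  qed
  have seqconv: "convergent (\<lambda>n. g (u n))" if u1: "\<And>n. u n \<ge> real n + 1" and um: "\<And>n. u n \<le> u (Suc n)" for u
  proof -
    have ge1: "u n \<ge> 1" for n using u1[of n] by simp
    have "(\<forall>n. g (u n) \<in> C) \<and> (\<forall>n. cone_le C (g (u (Suc n))) (g (u n)))"
      using inC[OF ge1] mono[OF ge1 um] by blast
    moreover have "(\<forall>n. g (u n) \<in> C) \<and> (\<forall>n. cone_le C (g (u (Suc n))) (g (u n))) \<longrightarrow> convergent (\<lambda>n. g (u n))"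
      using reg unfolding regular_cone_def by (rule spec)
    ultimately show ?thesis by (rule rev_mp)
  qed
  define a where "a n = g (real n + 1)" for n
  have "convergent a" unfolding a_def by (rule seqconv) auto
  then obtain L where La: "a \<longlonglongrightarrow> L" unfolding convergent_def by blast
  have ev_ge: "eventually (\<lambda>n. w n \<ge> t) sequentially" if "\<And>n. w n \<ge> real n + 1" for w :: "nat \<Rightarrow> real" and t
  proof -
    obtain N :: nat where "t \<le> real N" using real_arch_simple by blast
    have "\<forall>n\<ge>N. t \<le> w n"
    proof (intro allI impI)
      fix n assume "n \<ge> N"
      then have "real N \<le> real n" by simp
      then show "t \<le> w n" using that[of n] \<open>t \<le> real N\<close> by linarith
    qed
    then show ?thesis unfolding eventually_sequentially by blast
  qed
  have Lbelow: "cone_le C L (g t)" if "t \<ge> 1" for t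
    using below[of "\<lambda>n. real n + 1" L t] La that ev_ge[of "\<lambda>n. real n + 1" t] unfolding a_def by auto
  have seqlim: "(\<lambda>n. g (u n)) \<longlonglongrightarrow> L" if u1: "\<And>n. u n \<ge> real n + 1" and um: "\<And>n. u n \<le> u (Suc n)" for u
  proof -
    obtain L' where L': "(\<lambda>n. g (u n)) \<longlonglongrightarrow> L'" using seqconv[OF u1 um] unfolding convergent_def by blast
    have "L' - L \<in> C"
    proof -
      have "(\<lambda>n. g (u n) - L) \<longlonglongrightarrow> L' - L" by (intro tendsto_intros L')
      moreover have "\<forall>n. g (u n) - L \<in> C"
      proof
        fix n have "u n \<ge> 1" using u1[of n] by simp
        then show "g (u n) - L \<in> C" using Lbelow[of "u n"] unfolding cone_le_def by simp
      qed
      ultimately show ?thesis using closed_lim[OF cc _ trivial_limit_sequentially always_eventually] by blast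
    qed
    moreover have "L - L' \<in> C"
    proof -
      have "(\<lambda>n. a n - L') \<longlonglongrightarrow> L - L'" by (intro tendsto_intros La)
      moreover have "\<forall>n. a n - L' \<in> C"
        using below[OF L' ev_ge[OF u1]] unfolding cone_le_def a_def by auto
      ultimately show ?thesis using closed_lim[OF cc _ trivial_limit_sequentially always_eventually] by blast
    qed
    ultimately have "L' = L" using le_antisym[OF cc, of L' L] unfolding cone_le_def by simp
    then show ?thesis using L' by simp
  qed
  have "(g \<longlongrightarrow> L) at_top"
  proof (rule ccontr)
    assume "\<not> (g \<longlongrightarrow> L) at_top"
    then obtain e where e: "e > 0" "\<not> eventually (\<lambda>t. dist (g t) L < e) at_top"
      unfolding tendsto_iff by blast
    then have "\<forall>N. \<exists>t\<ge>N. \<not> dist (g t) L < e" unfolding eventually_at_top_linorder by blast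
    then have "\<forall>N. \<exists>t. N \<le> t \<and> \<not> dist (g t) L < e" by blast
    from choice[OF this] obtain pick where pk: "\<forall>N. N \<le> pick N \<and> \<not> dist (g (pick N)) L < e" by (elim exE)
    then have pick: "\<And>N. pick N \<ge> N" "\<And>N. \<not> dist (g (pick N)) L < e" by auto
    define u where "u = rec_nat (pick 1) (\<lambda>n un. pick (un + 1))"
    have u0: "u 0 = pick 1" and uS: "\<And>n. u (Suc n) = pick (u n + 1)" unfolding u_def by simp_all
    have u1: "u n \<ge> real n + 1" for n
    proof (induction n)
      case 0 then show ?case using u0 pick(1)[of 1] by simp
    next
      case (Suc n) then show ?case using uS[of n] pick(1)[of "u n + 1"] by simp
    qed
    have um: "u n \<le> u (Suc n)" for n using uS[of n] pick(1)[of "u n + 1"] by simp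
    have "(\<lambda>n. g (u n)) \<longlonglongrightarrow> L" by (rule seqlim[OF u1 um])
    then have "eventually (\<lambda>n. dist (g (u n)) L < e) sequentially" using e(1) by (rule tendstoD)
    then obtain N0 where N0: "\<forall>n\<ge>N0. dist (g (u n)) L < e" unfolding eventually_sequentially ..
    define n where "n = N0"
    have "dist (g (u n)) L < e" using N0 unfolding n_def by simp
    moreover have "\<exists>N. u n = pick N"
    proof (cases n)
      case 0 then show ?thesis using u0 by blast
    next
      case (Suc m) then show ?thesis using uS[of m] by blast
    qed
    then obtain N1 where "u n = pick N1" ..
    then have "\<not> dist (g (u n)) L < e" using pick(2)[of N1] by simp
    ultimately show False by simp
  qed
  then show ?thesis using Lbelow by blast
qed


theorem proposition4p9:
  fixes C :: "'a::banach set" and f :: "'a \<Rightarrow> 'a"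
  assumes "closed_cone C" and "regular_cone C" and "interior C \<noteq> {}"
    and "f ` interior C \<subseteq> interior C"
    and "order_preserving_on C (interior C) f"
    and "subhomogeneous_on C (interior C) f"
  shows "(\<forall>x\<in>interior C. \<exists>L. ((\<lambda>t::real. inverse t *\<^sub>R f (t *\<^sub>R x)) \<longlongrightarrow> L) at_top)
    \<and> asymptotic_map f ` interior C \<subseteq> C
    \<and> order_preserving_on C (interior C) (asymptotic_map f)
    \<and> homogeneous_on (interior C) (asymptotic_map f)
    \<and> cone_spectral_radius C f = cone_spectral_radius C (asymptotic_map f)"
proof -
  note cc = assms(1)
  define I where "I = interior C"
  have IC: "I \<subseteq> C" unfolding I_def by (rule interior_subset)
  have fI: "x \<in> I \<Longrightarrow> f x \<in> I" for x using assms(4) unfolding I_def by blast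
  have sI: "x \<in> I \<Longrightarrow> t > 0 \<Longrightarrow> t *\<^sub>R x \<in> I" for x t using int_scale[OF cc] unfolding I_def by blast
  define g where "g x t = inverse t *\<^sub>R f (t *\<^sub>R x)" for x t
  have gmono: "cone_le C (g x s) (g x t)" if x: "x \<in> I" and t: "1 \<le> t" "t \<le> s" for x t s
  proof -
    have tx: "t *\<^sub>R x \<in> I" using sI[OF x] t by simp
    have st: "s / t \<ge> 1" using t by simp
    have eq: "(s/t) *\<^sub>R (t *\<^sub>R x) = s *\<^sub>R x" using t by simp
    have "cone_le C (f ((s/t) *\<^sub>R (t *\<^sub>R x))) ((s/t) *\<^sub>R f (t *\<^sub>R x))"
      using assms(6) tx st unfolding subhomogeneous_on_def I_def by blast
    then have "cone_le C (f (s *\<^sub>R x)) ((s/t) *\<^sub>R f (t *\<^sub>R x))" unfolding eq .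
    then have A: "cone_le C (inverse s *\<^sub>R f (s *\<^sub>R x)) (inverse s *\<^sub>R ((s/t) *\<^sub>R f (t *\<^sub>R x)))"
      using t by (intro le_scale[OF cc]) auto
    have "inverse s * (s/t) = inverse t" using t by (simp add: field_simps)
    then have B: "inverse s *\<^sub>R ((s/t) *\<^sub>R f (t *\<^sub>R x)) = inverse t *\<^sub>R f (t *\<^sub>R x)"
      by (simp only: scaleR_scaleR)
    show ?thesis using A unfolding g_def B .
  qed
  have ginC: "g x t \<in> C" if "x \<in> I" "1 \<le> t" for x t
  proof -
    have "f (t *\<^sub>R x) \<in> C" using fI sI IC that by auto
    then show ?thesis unfolding g_def using cc_scale[OF cc] that by simp
  qed
  have "\<forall>x\<in>I. \<exists>L. (g x \<longlongrightarrow> L) at_top \<and> (\<forall>t\<ge>1. cone_le C L (g x t))"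
  proof
    fix x assume x: "x \<in> I"
    show "\<exists>L. (g x \<longlongrightarrow> L) at_top \<and> (\<forall>t\<ge>1. cone_le C L (g x t))"
      by (rule dec_limit[OF cc assms(2)]) (use gmono[OF x] ginC[OF x] in auto)
  qed
  from bchoice[OF this] obtain Lf where
    Lf0: "\<forall>x\<in>I. (g x \<longlongrightarrow> Lf x) at_top \<and> (\<forall>t\<ge>1. cone_le C (Lf x) (g x t))" by blast
  have Lf: "\<And>x. x \<in> I \<Longrightarrow> (g x \<longlongrightarrow> Lf x) at_top"
    "\<And>x t. x \<in> I \<Longrightarrow> t \<ge> 1 \<Longrightarrow> cone_le C (Lf x) (g x t)"
    using Lf0 by auto
  have AM: "asymptotic_map f x = Lf x" if "x \<in> I" for x
    unfolding asymptotic_map_def using tendsto_Lim[OF trivial_limit_at_top_linorder Lf(1)[OF that]]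
    unfolding g_def by simp
  have P1: "\<forall>x\<in>interior C. \<exists>L. ((\<lambda>t::real. inverse t *\<^sub>R f (t *\<^sub>R x)) \<longlongrightarrow> L) at_top"
    using Lf(1) unfolding g_def I_def by blast
  have LfC: "Lf x \<in> C" if x: "x \<in> I" for x
  proof -
    have "eventually (\<lambda>t. g x t \<in> C) at_top"
      using eventually_ge_at_top[of "1::real"] by eventually_elim (use ginC[OF x] in auto)
    then show ?thesis using closed_lim[OF cc Lf(1)[OF x]] by simp
  qed
  have P2: "asymptotic_map f ` interior C \<subseteq> C"
    using AM LfC unfolding I_def by auto
  have P3: "order_preserving_on C (interior C) (asymptotic_map f)"
    unfolding order_preserving_on_def
  proof (intro ballI impI)
    fix x y assume x: "x \<in> interior C" and y: "y \<in> interior C" and xy: "cone_le C x y"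
    have lim: "((\<lambda>t. g y t - g x t) \<longlongrightarrow> Lf y - Lf x) at_top"
      using x y by (intro tendsto_intros Lf(1)) (auto simp: I_def)
    have "eventually (\<lambda>t. g y t - g x t \<in> C) at_top"
      using eventually_ge_at_top[of "1::real"]
    proof eventually_elim
      case (elim t)
      have "cone_le C (t *\<^sub>R x) (t *\<^sub>R y)" using le_scale[OF cc _ xy] elim by simp
      moreover have "t *\<^sub>R x \<in> interior C" "t *\<^sub>R y \<in> interior C" using sI x y elim by (auto simp: I_def)
      ultimately have "cone_le C (f (t *\<^sub>R x)) (f (t *\<^sub>R y))"
        using assms(5) unfolding order_preserving_on_def by blast
      then have "cone_le C (inverse t *\<^sub>R f (t *\<^sub>R x)) (inverse t *\<^sub>R f (t *\<^sub>R y))"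
        using le_scale[OF cc] elim by simp
      then show ?case unfolding g_def cone_le_def .
    qed
    then have "Lf y - Lf x \<in> C" using closed_lim[OF cc lim] by simp
    then show "cone_le C (asymptotic_map f x) (asymptotic_map f y)"
      using AM x y unfolding cone_le_def I_def by simp
  qed
  have P4: "homogeneous_on (interior C) (asymptotic_map f)"
    unfolding homogeneous_on_def
  proof (intro ballI allI impI)
    fix x :: 'a and s :: real assume x: "x \<in> interior C" and s: "s > 0"
    have xI: "x \<in> I" using x unfolding I_def .
    have fl: "filterlim (\<lambda>t::real. t * s) at_top at_top"
      unfolding filterlim_at_top
    proof
      fix Z :: real
      show "eventually (\<lambda>t. Z \<le> t * s) at_top"
        using eventually_ge_at_top[of "Z / s"] by eventually_elim (use s in \<open>simp add: pos_divide_le_eq\<close>)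
    qed
    have "((\<lambda>t. g x (t * s)) \<longlongrightarrow> Lf x) at_top"
      by (rule filterlim_compose[OF Lf(1)[OF xI] fl])
    then have lim: "((\<lambda>t. s *\<^sub>R g x (t * s)) \<longlongrightarrow> s *\<^sub>R Lf x) at_top"
      by (intro tendsto_intros)
    have "eventually (\<lambda>t. s *\<^sub>R g x (t * s) = inverse t *\<^sub>R f (t *\<^sub>R (s *\<^sub>R x))) at_top"
      using eventually_gt_at_top[of "0::real"]
    proof eventually_elim
      case (elim t)
      have e1: "t *\<^sub>R s *\<^sub>R x = (t * s) *\<^sub>R x" by simp
      have e2: "s * inverse (t * s) = inverse t" using s elim by (simp add: field_simps)
      show ?case unfolding g_def e1 scaleR_scaleR e2 ..
    qed
    then have "((\<lambda>t. inverse t *\<^sub>R f (t *\<^sub>R (s *\<^sub>R x))) \<longlongrightarrow> s *\<^sub>R Lf x) at_top"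
      by (rule Lim_transform_eventually[OF lim])
    then have "asymptotic_map f (s *\<^sub>R x) = s *\<^sub>R Lf x"
      unfolding asymptotic_map_def by (rule tendsto_Lim[OF trivial_limit_at_top_linorder])
    then show "asymptotic_map f (s *\<^sub>R x) = s *\<^sub>R asymptotic_map f x" using AM[OF xI] by simp
  qed
  have P5: "cone_spectral_radius C f = cone_spectral_radius C (asymptotic_map f)"
  proof -
    define M1 where "M1 x = Mfun C (f x) x" for x
    define M2 where "M2 x = Mfun C (Lf x) x" for x
    have r1: "cone_spectral_radius C f = Inf (M1 ` I)"
      unfolding cone_spectral_radius_def M1_def I_def ..
    have "(\<lambda>x. Mfun C (asymptotic_map f x) x) ` I = M2 ` I"
      unfolding M2_def using AM by (intro image_cong) auto
    then have r2: "cone_spectral_radius C (asymptotic_map f) = Inf (M2 ` I)"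
      unfolding cone_spectral_radius_def I_def by simp
    have Ine: "I \<noteq> {}" using assms(3) unfolding I_def .
    have M1nn: "M1 x \<ge> 0" if "x \<in> I" for x
      unfolding M1_def using Mfun_nonneg[OF cc] that unfolding I_def by blast
    have M2nn: "M2 x \<ge> 0" if "x \<in> I" for x
      unfolding M2_def using Mfun_nonneg[OF cc] that unfolding I_def by blast
    have bdd1: "bdd_below (M1 ` I)" using M1nn by (intro bdd_belowI[of _ 0]) auto
    have bdd2: "bdd_below (M2 ` I)" using M2nn by (intro bdd_belowI[of _ 0]) auto
    have "Inf (M2 ` I) \<le> Inf (M1 ` I)"
    proof (rule cInf_greatest)
      show "M1 ` I \<noteq> {}" using Ine by simp
    next
      fix m assume "m \<in> M1 ` I"
      then obtain x where x: "x \<in> I" and m: "m = M1 x" by blast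
      have "cone_le C (Lf x) (g x 1)" using Lf(2)[OF x] by simp
      then have "cone_le C (Lf x) (f x)" unfolding g_def by simp
      then have "M2 x \<le> M1 x" unfolding M1_def M2_def
        using Mfun_mono[OF cc] x unfolding I_def by blast
      moreover have "Inf (M2 ` I) \<le> M2 x" using bdd2 x by (intro cInf_lower) auto
      ultimately show "Inf (M2 ` I) \<le> m" using m by simp
    qed
    moreover have "Inf (M1 ` I) \<le> Inf (M2 ` I)"
    proof (rule cInf_greatest)
      show "M2 ` I \<noteq> {}" using Ine by simp
    next
      fix m assume "m \<in> M2 ` I"
      then obtain x where x: "x \<in> I" and m: "m = M2 x" by blast
      have key: "Inf (M1 ` I) \<le> M2 x + e" if e: "e > 0" for e
      proof -
        define B where "B = {\<beta>::real. \<beta> > 0 \<and> cone_le C (Lf x) (\<beta> *\<^sub>R x)}"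
        have Bne: "B \<noteq> {}" using int_dominates[OF cc, of x "Lf x"] x unfolding B_def I_def by blast
        have "Inf B < M2 x + e / 2" unfolding M2_def Mfun_def B_def[symmetric] using e by simp
        then obtain b where b: "b \<in> B" "b < M2 x + e / 2" using cInf_lessD[OF Bne] by blast
        have bp: "b > 0" and bL: "cone_le C (Lf x) (b *\<^sub>R x)" using b(1) unfolding B_def by auto
        obtain d where d: "d > 0" "\<And>v. norm v < d \<Longrightarrow> x + v \<in> C"
          using int_absorb[of x C] x unfolding I_def by blast
        have "eventually (\<lambda>t. dist (g x t) (Lf x) < d * (e/2)) at_top"
          using Lf(1)[OF x] d(1) e by (intro tendstoD) auto
        then obtain N where N: "\<And>t. t \<ge> N \<Longrightarrow> dist (g x t) (Lf x) < d * (e/2)"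
          unfolding eventually_at_top_linorder by blast
        define t where "t = max N 1"
        have t1: "t \<ge> 1" and tN: "t \<ge> N" unfolding t_def by auto
        define v where "v = - ((2/e) *\<^sub>R (g x t - Lf x))"
        have "norm v = (2/e) * norm (g x t - Lf x)" unfolding v_def using e by simp
        also have "\<dots> < (2/e) * (d * (e/2))"
          using N[OF tN] e by (intro mult_strict_left_mono) (auto simp: dist_norm)
        also have "\<dots> = d" using e by simp
        finally have "x + v \<in> C" using d(2) by blast
        then have "(e/2) *\<^sub>R (x + v) \<in> C" using cc_scale[OF cc] e by simp
        moreover have "(e/2) *\<^sub>R (x + v) = (e/2) *\<^sub>R x - (g x t - Lf x)"
          unfolding v_def using e by (simp add: scaleR_right_diff_distrib scaleR_right_distrib scaleR_add_right)
        ultimately have c0: "(e/2) *\<^sub>R x - (g x t - Lf x) \<in> C" by simp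
        have eq2: "Lf x + (e/2) *\<^sub>R x - g x t = (e/2) *\<^sub>R x - (g x t - Lf x)" by (simp add: algebra_simps)
        have c1: "cone_le C (g x t) (Lf x + (e/2) *\<^sub>R x)"
          unfolding cone_le_def eq2 by (rule c0)
        have c2: "cone_le C (Lf x + (e/2) *\<^sub>R x) ((b + e/2) *\<^sub>R x)"
          using bL unfolding cone_le_def by (simp add: algebra_simps)
        have "cone_le C (g x t) ((b + e/2) *\<^sub>R x)" by (rule le_trans[OF cc c1 c2])
        then have "cone_le C (t *\<^sub>R g x t) (t *\<^sub>R ((b + e/2) *\<^sub>R x))"
          using t1 by (intro le_scale[OF cc]) auto
        moreover have "t *\<^sub>R g x t = f (t *\<^sub>R x)" unfolding g_def using t1 by simp
        moreover have "t *\<^sub>R ((b + e/2) *\<^sub>R x) = (b + e/2) *\<^sub>R (t *\<^sub>R x)" by simp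
        ultimately have "cone_le C (f (t *\<^sub>R x)) ((b + e/2) *\<^sub>R (t *\<^sub>R x))" by (simp add: mult.commute)
        then have "M1 (t *\<^sub>R x) \<le> b + e/2" unfolding M1_def using bp e
          by (intro Mfun_le) auto
        moreover have "Inf (M1 ` I) \<le> M1 (t *\<^sub>R x)"
          using bdd1 sI[OF x] t1 by (intro cInf_lower) auto
        ultimately show ?thesis using b(2) by simp
      qed
      show "Inf (M1 ` I) \<le> m" unfolding m by (rule field_le_epsilon[OF key])
    qed
    ultimately show ?thesis using r1 r2 by simp
  qed
  show ?thesis using P1 P2 P3 P4 P5 by blast
qed

end
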